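(* Let $n\ge2$ and $\sigma\ge0$, and let $\mathbf p_{n,\sigma}$ be a unit eigenvector of $\mathbf A_\sigma^{-1}\mathbf B$ associated with its unique negative eigenvalue. (i) For $\sigma=0$ we have $\mathbf p_{n,0}=\pm(0,\dots,0,1)^T$. (ii) For $\sigma>0$ all entries of $\mathbf p_{n,\sigma}$ are nonzero and have the same sign. More precisely, $p_{k,n,\sigma}=b_1(r^k+r^{n-k})$ for $k=1,\dots,n$, with some $r>1$ and $b_1\ne0$ depending on $\sigma$. (iii) Consequently, for any $\sigma,\sigma'\ge0$ we have $\mathbf p_{n,\sigma}\cdot\mathbf p_{n,\sigma'}\neq0$.
   Context: Let $\mathbf L\in\mathbb R^{n\times n}$ be the periodic discrete one-dimensional Laplacian, i.e. $(\mathbf L\mathbf x)_i=x_{i-1}-2x_i+x_{i+1}$ with indices taken modulo $n$. For $\sigma\ge 0$ set $\mathbf A_\sigma=\mathbf I-\sigma\mathbf L$. Let $\mathbf B=\mathrm{diag}(1,\dots,1,-1)\in\mathbb R^{n\times n}$. The matrix $\mathbf A_\sigma^{-1}\mathbf B$ is diagonalizable with real eigenvalues, exactly one of which is negative. *)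

theory Defs
  imports "Jordan_Normal_Form.Char_Poly" "Jordan_Normal_Form.Gauss_Jordan_Elimination"
begin

text \<open>Indices of vectors/matrices are 0-based: paper index k (1..n) corresponds to k-1.
  Periodic discrete Laplacian: (L x)_i = x_(i-1) - 2 x_i + x_(i+1), indices mod n.\<close>
definition lap_mat :: "nat \<Rightarrow> real mat" where
  "lap_mat n = mat n n (\<lambda>(i,j).
      (if j = i then -2 else 0)
    + (if j = (i + 1) mod n then 1 else 0)
    + (if j = (i + n - 1) mod n then 1 else 0))"

definition A_mat :: "nat \<Rightarrow> real \<Rightarrow> real mat" where
  "A_mat n \<sigma> = 1\<^sub>m n - \<sigma> \<cdot>\<^sub>m lap_mat n"

definition B_mat :: "nat \<Rightarrow> real mat" where
  "B_mat n = mat n n (\<lambda>(i,j). if i = j then (if i = n - 1 then -1 else 1) else 0)"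

text \<open>The matrix A_sigma^(-1) B (A_sigma is invertible for sigma >= 0).\<close>
definition AinvB :: "nat \<Rightarrow> real \<Rightarrow> real mat" where
  "AinvB n \<sigma> = the (mat_inverse (A_mat n \<sigma>)) * B_mat n"

definition neg_unit_eigvec :: "nat \<Rightarrow> real \<Rightarrow> real vec \<Rightarrow> bool" where
  "neg_unit_eigvec n \<sigma> p \<longleftrightarrow>
     (\<exists>ev. ev < 0 \<and> eigenvector (AinvB n \<sigma>) p ev) \<and> p \<bullet> p = 1"

end

theory Submission
  imports Defs
begin

lemma mat_vec_sum: "i < n \<Longrightarrow> v \<in> carrier_vec n \<Longrightarrow> (mat n n f *\<^sub>v v) $ i = (\<Sum>j<n. f (i,j) * v $ j)"
  by (auto simp: scalar_prod_def row_def lessThan_atLeast0 intro!: sum.cong)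

lemma A_mat_eq: "A_mat n \<sigma> = mat n n (\<lambda>(i,j). (if i = j then 1 else 0) - \<sigma> *
      ((if j = i then -2 else 0)
    + (if j = (i + 1) mod n then 1 else 0)
    + (if j = (i + n - 1) mod n then 1 else 0)))"
  unfolding A_mat_def lap_mat_def by (rule eq_matI) auto

lemma A_mult: assumes "i < n" "v \<in> carrier_vec n"
  shows "(A_mat n \<sigma> *\<^sub>v v) $ i = (1 + 2*\<sigma>) * v $ i - \<sigma> * (v $ ((i + n - 1) mod n) + v $ ((i+1) mod n))"
proof -
  have "(A_mat n \<sigma> *\<^sub>v v) $ i = (\<Sum>j<n. ((if i = j then 1 else 0) - \<sigma> *
      ((if j = i then -2 else 0)
    + (if j = (i + 1) mod n then 1 else 0)
    + (if j = (i + n - 1) mod n then 1 else 0))) * v $ j)"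
    unfolding A_mat_eq using assms by (subst mat_vec_sum) auto
  also have "\<dots> = (\<Sum>j<n. (1+2*\<sigma>)*(if j = i then v$j else 0) - \<sigma>*(if j = (i+1) mod n then v$j else 0) - \<sigma>*(if j=(i+n-1) mod n then v$j else 0))"
    by (rule sum.cong) (auto simp: algebra_simps)
  also have "\<dots> = (1+2*\<sigma>)*(\<Sum>j<n. (if j = i then v$j else 0)) - \<sigma>*(\<Sum>j<n. (if j = (i+1) mod n then v$j else 0)) - \<sigma>*(\<Sum>j<n. (if j=(i+n-1) mod n then v$j else 0))"
    by (simp only: sum_subtractf sum_distrib_left)
  also have "\<dots> = (1 + 2*\<sigma>) * v $ i - \<sigma> * (v $ ((i + n - 1) mod n) + v $ ((i+1) mod n))"
    using assms by (simp add: algebra_simps)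
  finally show ?thesis .
qed

lemma B_mult: assumes "i < n" "v \<in> carrier_vec n"
  shows "(B_mat n *\<^sub>v v) $ i = (if i = n - 1 then - v $ i else v $ i)"
proof -
  have "(B_mat n *\<^sub>v v) $ i = (\<Sum>j<n. (if i = j then (if i = n - 1 then -1 else 1) else 0) * v $ j)"
    unfolding B_mat_def using assms by (subst mat_vec_sum) auto
  also have "\<dots> = (\<Sum>j<n. if j = i then (if i = n - 1 then -1 else 1) * v $ j else 0)"
    by (rule sum.cong) auto
  also have "\<dots> = (if i = n - 1 then - v $ i else v $ i)" using assms by simp
  finally show ?thesis .
qed


lemma rec_sol:
  fixes q :: "nat \<Rightarrow> real" and r :: real
  assumes r: "r > 1" and n: "n \<ge> 1"
  and rec: "\<And>k. 1 \<le> k \<Longrightarrow> k + 1 \<le> n \<Longrightarrow> q (k+1) = (r + 1/r) * q k - q (k-1)"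
  and per: "q n = q 0"
  shows "\<exists>a. \<forall>k\<le>n. q k = a * (r^k + r^(n-k))"
proof -
  define a where "a = (q 1 - q 0 / r) / (r - 1/r)"
  define b where "b = q 0 - a"
  have rr: "r * r > 1" using r by (simp add: less_1_mult)
  have rne: "r - 1/r \<noteq> 0" using r rr by (simp add: field_simps)
  have r0: "r \<noteq> 0" using r by simp
  have step: "k+1 \<le> n \<Longrightarrow> q k = a*r^k + b*(1/r)^k \<and> q (k+1) = a*r^(k+1) + b*(1/r)^(k+1)" for k
  proof (induction k)
    case 0
    have ha: "a * (r - 1/r) = q 1 - q 0 / r" unfolding a_def using rne by simp
    have "a*r + b/r = a*(r-1/r) + q 0/r" unfolding b_def using r0 by (simp add: field_simps)
    then have "q 1 = a * r + b / r" using ha by simp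
    then show ?case by (simp add: b_def)
  next
    case (Suc k)
    then have IH: "q k = a*r^k + b*(1/r)^k" "q (k+1) = a*r^(k+1) + b*(1/r)^(k+1)" by auto
    have e: "q (k+2) = (r + 1/r) * q (k+1) - q k" using rec[of "k+1"] Suc.prems by simp
    have "(r + 1/r) * (a*r^(k+1) + b*(1/r)^(k+1)) - (a*r^k + b*(1/r)^k) = a*r^(k+2) + b*(1/r)^(k+2)"
      using r0 by (simp add: field_simps power_Suc)
    then show ?case using IH e by (simp add: numeral_2_eq_2)
  qed
  have gen: "q k = a*r^k + b*(1/r)^k" if "k \<le> n" for k
  proof (cases "k + 1 \<le> n")
    case True then show ?thesis using step by blast
  next
    case False
    then have "k = (n-1) + 1" using that n by simp
    then show ?thesis using step[of "n-1"] n by simp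
  qed
  have rn: "r^n > 1" using r n by (simp add: one_less_power)
  have "a*r^n + b*(1/r)^n = a + b" using gen[of n] gen[of 0] per by simp
  then have e1: "a*r^n + b/r^n = a + b" by (simp add: power_one_over)
  have x0: "r^n \<noteq> 0" using r0 by simp
  from e1 have e2: "a*r^n*r^n + b = (a+b)*r^n" using x0 by (simp add: field_simps)
  have "(a*r^n - b) * (r^n - 1) = a*r^n*r^n + b - (a+b)*r^n" by (simp add: algebra_simps)
  then have "(a*r^n - b) * (r^n - 1) = 0" using e2 by simp
  then have b: "b = a * r^n" using rn by simp
  show ?thesis
  proof (intro exI allI impI)
    fix k assume k: "k \<le> n"
    have "r^n = r^k * r^(n-k)" using k by (simp add: power_add[symmetric])
    then show "q k = a * (r^k + r^(n-k))" using gen[OF k] b r0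
      by (simp add: field_simps power_one_over)
  qed
qed

lemma A_carrier: "A_mat n \<sigma> \<in> carrier_mat n n" unfolding A_mat_def lap_mat_def by auto
lemma B_carrier: "B_mat n \<in> carrier_mat n n" unfolding B_mat_def by auto

lemma A_inj: assumes "\<sigma> \<ge> 0" "v \<in> carrier_vec n" "A_mat n \<sigma> *\<^sub>v v = 0\<^sub>v n"
  shows "v = 0\<^sub>v n"
proof (cases "n = 0")
  case True then show ?thesis using assms by auto
next
  case False
  define M where "M = Max ((\<lambda>i. \<bar>v$i\<bar>) ` {..<n})"
  have fin: "finite ((\<lambda>i. \<bar>v$i\<bar>) ` {..<n})" by simp
  have ne: "(\<lambda>i. \<bar>v$i\<bar>) ` {..<n} \<noteq> {}" using False by auto
  obtain m where m: "m < n" "\<bar>v$m\<bar> = M" using Max_in[OF fin ne] unfolding M_def by auto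
  have le: "\<bar>v$i\<bar> \<le> M" if "i < n" for i unfolding M_def using fin that by (intro Max_ge) auto
  have "(A_mat n \<sigma> *\<^sub>v v) $ m = 0" using assms m by simp
  then have eq: "(1 + 2*\<sigma>) * v $ m = \<sigma> * (v $ ((m + n - 1) mod n) + v $ ((m+1) mod n))"
    using A_mult[OF m(1) assms(2)] by simp
  have h1: "\<bar>v $ ((m + n - 1) mod n)\<bar> \<le> M" using False by (intro le) simp
  have h2: "\<bar>v $ ((m + 1) mod n)\<bar> \<le> M" using False by (intro le) simp
  have "\<bar>v $ ((m + n - 1) mod n) + v $ ((m+1) mod n)\<bar> \<le> 2*M"
    using abs_triangle_ineq[of "v $ ((m + n - 1) mod n)" "v $ ((m+1) mod n)"] h1 h2 by linarith
  then have "\<sigma> * \<bar>v $ ((m + n - 1) mod n) + v $ ((m+1) mod n)\<bar> \<le> \<sigma> * (2*M)"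
    using assms(1) by (rule mult_left_mono)
  then have i1: "\<bar>\<sigma> * (v $ ((m + n - 1) mod n) + v $ ((m+1) mod n))\<bar> \<le> \<sigma> * (2*M)"
    using assms(1) by (simp add: abs_mult)
  have i2: "\<bar>(1 + 2*\<sigma>) * v $ m\<bar> = (1+2*\<sigma>) * M" using assms(1) m by (simp add: abs_mult)
  have "(1+2*\<sigma>) * M \<le> \<sigma> * (2*M)" using eq i1 i2 by simp
  then have M0: "M \<le> 0" by (simp add: algebra_simps)
  show ?thesis
  proof (rule eq_vecI)
    fix i assume "i < dim_vec (0\<^sub>v n)"
    then have "i < n" by simp
    then have "\<bar>v$i\<bar> \<le> 0" using le M0 by force
    then show "v $ i = 0\<^sub>v n $ i" using \<open>i < n\<close> by simp
  qed (use assms(2) in simp)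
qed

lemma A_inv: assumes "\<sigma> \<ge> 0"
  shows "\<exists>Ai. mat_inverse (A_mat n \<sigma>) = Some Ai"
proof -
  have "\<not> (\<exists>v. v \<in> carrier_vec n \<and> v \<noteq> 0\<^sub>v n \<and> A_mat n \<sigma> *\<^sub>v v = 0\<^sub>v n)"
    using A_inj[OF assms] by blast
  then have "det (A_mat n \<sigma>) \<noteq> 0"
    unfolding det_0_iff_vec_prod_zero_field[OF A_carrier] .
  then have U: "A_mat n \<sigma> \<in> Units (ring_mat TYPE(real) n undefined)"
    by (rule det_non_zero_imp_unit[OF A_carrier])
  show ?thesis
  proof (cases "mat_inverse (A_mat n \<sigma>)")
    case None
    have "A_mat n \<sigma> \<notin> Units (ring_mat TYPE(real) n undefined)"
      by (rule mat_inverse(1)[OF A_carrier None])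
    with U show ?thesis by contradiction
  next
    case (Some Ai) then show ?thesis by blast
  qed
qed

lemma eig_eq: assumes "\<sigma> \<ge> 0" "neg_unit_eigvec n \<sigma> p"
  shows "p \<in> carrier_vec n \<and> p \<noteq> 0\<^sub>v n \<and> p \<bullet> p = 1 \<and>
    (\<exists>lam. lam < 0 \<and> (\<forall>i<n. (B_mat n *\<^sub>v p) $ i = lam * (A_mat n \<sigma> *\<^sub>v p) $ i))"
proof -
  obtain Ai where Ai: "mat_inverse (A_mat n \<sigma>) = Some Ai" using A_inv[OF assms(1)] by blast
  have inv1: "A_mat n \<sigma> * Ai = 1\<^sub>m n" and inv3: "Ai \<in> carrier_mat n n"
    using mat_inverse(2)[OF A_carrier Ai] by auto
  have AB: "AinvB n \<sigma> = Ai * B_mat n" unfolding AinvB_def Ai by simp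
  have dr: "dim_row (AinvB n \<sigma>) = n" unfolding AB using inv3 by simp
  obtain lam where l: "lam < 0" "eigenvector (AinvB n \<sigma>) p lam" and pp: "p \<bullet> p = 1"
    using assms(2) unfolding neg_unit_eigvec_def by blast
  have pc: "p \<in> carrier_vec n" and p0: "p \<noteq> 0\<^sub>v n" and ev: "(Ai * B_mat n) *\<^sub>v p = lam \<cdot>\<^sub>v p"
    using l(2) inv3 unfolding eigenvector_def AB by auto
  have Bc: "B_mat n *\<^sub>v p \<in> carrier_vec n" unfolding carrier_vec_def B_mat_def by simp
  have "B_mat n *\<^sub>v p = 1\<^sub>m n *\<^sub>v (B_mat n *\<^sub>v p)" using Bc by simp
  also have "\<dots> = (A_mat n \<sigma> * Ai) *\<^sub>v (B_mat n *\<^sub>v p)" unfolding inv1 ..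
  also have "\<dots> = A_mat n \<sigma> *\<^sub>v (Ai *\<^sub>v (B_mat n *\<^sub>v p))"
    by (rule assoc_mult_mat_vec[OF A_carrier inv3 Bc])
  also have "Ai *\<^sub>v (B_mat n *\<^sub>v p) = (Ai * B_mat n) *\<^sub>v p"
    by (rule assoc_mult_mat_vec[OF inv3 B_carrier pc, symmetric])
  also have "A_mat n \<sigma> *\<^sub>v ((Ai * B_mat n) *\<^sub>v p) = lam \<cdot>\<^sub>v (A_mat n \<sigma> *\<^sub>v p)"
    unfolding ev by (rule mult_mat_vec[OF A_carrier pc])
  finally have E: "B_mat n *\<^sub>v p = lam \<cdot>\<^sub>v (A_mat n \<sigma> *\<^sub>v p)" .
  have "\<forall>i<n. (B_mat n *\<^sub>v p) $ i = lam * (A_mat n \<sigma> *\<^sub>v p) $ i"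
  proof (intro allI impI)
    fix i assume i: "i < n"
    have "dim_vec (A_mat n \<sigma> *\<^sub>v p) = n" by (simp add: carrier_matD(1)[OF A_carrier])
    then show "(B_mat n *\<^sub>v p) $ i = lam * (A_mat n \<sigma> *\<^sub>v p) $ i" unfolding E using i by simp
  qed
  then show ?thesis using pc p0 pp l(1) by blast
qed


lemma part2: assumes n: "n \<ge> 2" and s: "\<sigma> > 0" and ne: "neg_unit_eigvec n \<sigma> p"
  shows "\<exists>r b1. r > 1 \<and> b1 \<noteq> 0 \<and> (\<forall>k\<in>{1..n}. p $ (k - 1) = b1 * (r ^ k + r ^ (n - k)))"
proof -
  from eig_eq[OF _ ne] s obtain lam where pc: "p \<in> carrier_vec n" and p0: "p \<noteq> 0\<^sub>v n"
    and l: "lam < 0" and eqs: "\<forall>i<n. (B_mat n *\<^sub>v p) $ i = lam * (A_mat n \<sigma> *\<^sub>v p) $ i"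
    by auto
  have row: "p$j = lam*((1+2*\<sigma>)*p$j - \<sigma>*(p$((j+n-1) mod n) + p$(j+1)))" if j: "j < n-1" for j
  proof -
    have jn: "j < n" "j \<noteq> n - 1" using j by auto
    have "(j+1) mod n = j+1" using j by simp
    then show ?thesis using eqs[rule_format, OF jn(1)] B_mult[OF jn(1) pc] A_mult[OF jn(1) pc] jn(2)
      by simp
  qed
  define c where "c = (1+2*\<sigma>-1/lam)/\<sigma>"
  have "1/lam < 0" using l by simp
  then have "(1 - 1/lam)/\<sigma> > 0" using s by simp
  moreover have "c = 2 + (1 - 1/lam)/\<sigma>" unfolding c_def using s by (simp add: field_simps)
  ultimately have c2: "c > 2" by simp
  define sq where "sq = sqrt (c^2 - 4)"
  have "c*c > 2*2" using c2 by (intro mult_strict_mono) auto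
  then have c4: "c^2 - 4 > 0" by (simp add: power2_eq_square)
  have sq0: "sq \<ge> 0" unfolding sq_def using c4 by simp
  have sq2: "sq^2 = c^2 - 4" unfolding sq_def using c4 by simp
  define r where "r = (c + sq)/2"
  have r1: "r > 1" unfolding r_def using sq0 c2 by simp
  have "r * (c - r) = 1" unfolding r_def using sq2 by (simp add: field_simps power2_eq_square)
  then have rc: "r + 1/r = c" using r1 by (simp add: field_simps)
  define q where "q k = p$((k+n-1) mod n)" for k
  have rec: "q (k+1) = (r + 1/r) * q k - q (k-1)" if k: "1 \<le> k" "k + 1 \<le> n" for k
  proof -
    obtain j where kj: "k = Suc j" using k by (cases k) auto
    have jl: "j < n - 1" using k kj by simp
    have q1: "q k = p$j" unfolding q_def kj using jl by simp
    have m: "Suc (j+n) mod n = Suc j"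
    proof -
      have "Suc (j+n) mod n = (Suc j + n) mod n" by simp
      also have "\<dots> = Suc j mod n" by (rule mod_add_self2)
      also have "\<dots> = Suc j" using jl by simp
      finally show ?thesis .
    qed
    have q2: "q (k+1) = p$(j+1)" unfolding q_def kj using m by simp
    have q0: "q (k-1) = p$((j+n-1) mod n)" unfolding q_def kj by simp
    have "p$j = lam*((1+2*\<sigma>)*p$j - \<sigma>*(q (k-1) + q (k+1)))" using row[OF jl] q0 q2 by simp
    then have "q (k+1) = c * q k - q (k-1)" unfolding c_def q1 using s l
      by (simp add: field_simps)
    then show ?thesis using rc by simp
  qed
  have per: "q n = q 0"
  proof -
    have "(n + n - 1) mod n = ((n - 1) + n) mod n" using n by (simp add: algebra_simps)
    also have "\<dots> = (n - 1) mod n" by (rule mod_add_self2)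
    finally have "(n + n - 1) mod n = (0 + n - 1) mod n" by simp
    then show ?thesis unfolding q_def by simp
  qed
  obtain a where a: "\<forall>k\<le>n. q k = a * (r^k + r^(n-k))" using rec_sol[OF r1 _ rec per] n by auto
  have pq: "p $ (k - 1) = q k" if "k \<in> {1..n}" for k
  proof -
    have e: "k+n-1 = (k - 1) + n" using that by simp
    have "(k+n-1) mod n = ((k - 1) + n) mod n" unfolding e ..
    also have "\<dots> = (k - 1) mod n" by (rule mod_add_self2)
    also have "\<dots> = k - 1" using that by (intro mod_less) auto
    finally show ?thesis unfolding q_def by simp
  qed
  have a0: "a \<noteq> 0"
  proof
    assume "a = 0"
    then have "p = 0\<^sub>v n"
    proof (intro eq_vecI)
      fix i assume "i < dim_vec (0\<^sub>v n)"
      then have "Suc i \<in> {1..n}" by simp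
      then show "p $ i = 0\<^sub>v n $ i" using pq[of "Suc i"] a \<open>a = 0\<close> \<open>i < dim_vec (0\<^sub>v n)\<close> by simp
    qed (use pc in simp)
    with p0 show False by simp
  qed
  show ?thesis using r1 a0 pq a by (intro exI[of _ r] exI[of _ a]) auto
qed

lemma part1: assumes n: "n \<ge> 2" and ne: "neg_unit_eigvec n 0 p"
  shows "p = unit_vec n (n - 1) \<or> p = - unit_vec n (n - 1)"
proof -
  from eig_eq[OF _ ne] obtain lam where pc: "p \<in> carrier_vec n" and pp: "p \<bullet> p = 1"
    and l: "lam < 0" and eqs: "\<forall>i<n. (B_mat n *\<^sub>v p) $ i = lam * (A_mat n 0 *\<^sub>v p) $ i"
    by auto
  have z: "p $ i = 0" if "i < n" "i \<noteq> n - 1" for i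
  proof -
    have "p $ i = lam * p $ i" using eqs[rule_format, OF that(1)] B_mult[OF that(1) pc] A_mult[OF that(1) pc] that(2)
      by simp
    then have "(1 - lam) * p $ i = 0" by (simp add: algebra_simps)
    then show ?thesis using l by simp
  qed
  have "p \<bullet> p = (\<Sum>i\<in>{0..<n}. p$i * p$i)" unfolding scalar_prod_def using pc by simp
  also have "\<dots> = (\<Sum>i\<in>{0..<n}. if i = n - 1 then p$(n-1) * p$(n-1) else 0)"
    by (rule sum.cong) (auto simp: z)
  also have "\<dots> = p$(n-1) * p$(n-1)" using n by simp
  finally have "p$(n-1) * p$(n-1) = 1" using pp by simp
  then have "p$(n-1) = 1 \<or> p$(n-1) = -1"
    by (metis mult_cancel_left1 mult_minus_left square_eq_iff mult.commute)
  then show ?thesis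
  proof
    assume h: "p$(n-1) = 1"
    have "p = unit_vec n (n - 1)" using pc h z by (intro eq_vecI) auto
    then show ?thesis ..
  next
    assume h: "p$(n-1) = -1"
    have "p = - unit_vec n (n - 1)" using pc h z by (intro eq_vecI) auto
    then show ?thesis ..
  qed
qed

lemma signs: assumes n: "n \<ge> 2" and s: "\<sigma> > 0" and ne: "neg_unit_eigvec n \<sigma> p"
  shows "(\<forall>k<n. p $ k > 0) \<or> (\<forall>k<n. p $ k < 0)"
proof -
  obtain r b1 where r: "r > 1" "b1 \<noteq> 0" and f: "\<forall>k\<in>{1..n}. p $ (k - 1) = b1 * (r ^ k + r ^ (n - k))"
    using part2[OF assms] by blast
  have pk: "p $ k = b1 * (r ^ Suc k + r ^ (n - Suc k))" if "k < n" for k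
    using f[rule_format, of "Suc k"] that by simp
  have pos: "r ^ Suc k + r ^ (n - Suc k) > 0" for k using r by (simp add: add_pos_pos)
  show ?thesis
  proof (cases "b1 > 0")
    case True then show ?thesis using pk pos by (simp add: mult_pos_pos)
  next
    case False then have "b1 < 0" using r by simp
    then show ?thesis using pk pos by (simp add: mult_neg_pos)
  qed
qed

lemma dot_unit: fixes v :: "real vec" assumes "v \<in> carrier_vec n" "n \<ge> 2" "v $ (n - 1) \<noteq> 0"
  and "p = unit_vec n (n - 1) \<or> p = - unit_vec n (n - 1)"
  shows "p \<bullet> v \<noteq> 0"
proof -
  have n1: "n - 1 < n" using assms(2) by simp
  have e: "unit_vec n (n - 1) \<bullet> v = v $ (n - 1)" using scalar_prod_left_unit[OF assms(1) n1] .
  have "(- unit_vec n (n - 1)) \<bullet> v = - (unit_vec n (n - 1) \<bullet> v)"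
    by (rule scalar_prod_uminus_left) (use assms(1) in simp)
  then show ?thesis using assms(3,4) e by auto
qed

lemma dot_sign: fixes p p' :: "real vec" assumes "p \<in> carrier_vec n" "p' \<in> carrier_vec n" "n \<ge> 2"
  and "(\<forall>k<n. p $ k > 0) \<or> (\<forall>k<n. p $ k < 0)" and "(\<forall>k<n. p' $ k > 0) \<or> (\<forall>k<n. p' $ k < 0)"
  shows "p \<bullet> p' \<noteq> 0"
proof -
  have d: "p \<bullet> p' = (\<Sum>i\<in>{0..<n}. p$i * p'$i)" unfolding scalar_prod_def using assms(2) by simp
  have ne: "{0..<n} \<noteq> {}" using assms(3) by auto
  have "(\<forall>i<n. p$i * p'$i > 0) \<or> (\<forall>i<n. p$i * p'$i < 0)"
  proof (cases "\<forall>k<n. p $ k > 0")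
    case T1: True
    show ?thesis
    proof (cases "\<forall>k<n. p' $ k > 0")
      case True then show ?thesis using T1 by (intro disjI1 allI impI mult_pos_pos) auto
    next
      case False then have "\<forall>k<n. p' $ k < 0" using assms(5) by blast
      then show ?thesis using T1 by (intro disjI2 allI impI mult_pos_neg) auto
    qed
  next
    case F1: False then have T1: "\<forall>k<n. p $ k < 0" using assms(4) by blast
    show ?thesis
    proof (cases "\<forall>k<n. p' $ k > 0")
      case True then show ?thesis using T1 by (intro disjI2 allI impI mult_neg_pos) auto
    next
      case False then have "\<forall>k<n. p' $ k < 0" using assms(5) by blast
      then show ?thesis using T1 by (intro disjI1 allI impI mult_neg_neg) auto
    qed
  qed
  then show ?thesis
  proof
    assume h: "\<forall>i<n. p$i * p'$i > 0"
    have "(\<Sum>i\<in>{0..<n}. p$i * p'$i) > 0" using ne h by (intro sum_pos) auto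
    then show ?thesis using d by simp
  next
    assume h: "\<forall>i<n. p$i * p'$i < 0"
    have "(\<Sum>i\<in>{0..<n}. - (p$i * p'$i)) > 0" using ne h by (intro sum_pos) auto
    then show ?thesis using d by (simp add: sum_negf)
  qed
qed

theorem mainTheorem3:
  fixes n :: nat
  assumes "n \<ge> 2"
  shows
    "(\<forall>p. neg_unit_eigvec n 0 p \<longrightarrow>
         p = unit_vec n (n - 1) \<or> p = - unit_vec n (n - 1))
   \<and> (\<forall>\<sigma> p. \<sigma> > 0 \<longrightarrow> neg_unit_eigvec n \<sigma> p \<longrightarrow>
         (\<forall>k<n. p $ k \<noteq> 0)
       \<and> ((\<forall>k<n. p $ k > 0) \<or> (\<forall>k<n. p $ k < 0))
       \<and> (\<exists>r b1. r > 1 \<and> b1 \<noteq> 0 \<and>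
            (\<forall>k\<in>{1..n}. p $ (k - 1) = b1 * (r ^ k + r ^ (n - k)))))
   \<and> (\<forall>\<sigma> \<sigma>' p p'. \<sigma> \<ge> 0 \<longrightarrow> \<sigma>' \<ge> 0 \<longrightarrow>
         neg_unit_eigvec n \<sigma> p \<longrightarrow> neg_unit_eigvec n \<sigma>' p' \<longrightarrow> p \<bullet> p' \<noteq> 0)"
proof -
  have P1: "\<forall>p. neg_unit_eigvec n 0 p \<longrightarrow> p = unit_vec n (n - 1) \<or> p = - unit_vec n (n - 1)"
    using part1 assms by blast
  have P2: "(\<forall>k<n. p $ k \<noteq> 0)
       \<and> ((\<forall>k<n. p $ k > 0) \<or> (\<forall>k<n. p $ k < 0))
       \<and> (\<exists>r b1. r > 1 \<and> b1 \<noteq> 0 \<and>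
            (\<forall>k\<in>{1..n}. p $ (k - 1) = b1 * (r ^ k + r ^ (n - k))))"
    if s: "\<sigma> > 0" and ne: "neg_unit_eigvec n \<sigma> p" for \<sigma> p
  proof -
    have S: "(\<forall>k<n. p $ k > 0) \<or> (\<forall>k<n. p $ k < 0)" using signs[OF assms s ne] .
    then have "\<forall>k<n. p $ k \<noteq> 0" by force
    then show ?thesis using S part2[OF assms s ne] by blast
  qed
  have P3: "p \<bullet> p' \<noteq> 0" if s: "\<sigma> \<ge> 0" "\<sigma>' \<ge> 0" and ne: "neg_unit_eigvec n \<sigma> p" "neg_unit_eigvec n \<sigma>' p'"
    for \<sigma> \<sigma>' p p'
  proof -
  have pc: "p \<in> carrier_vec n" "p' \<in> carrier_vec n" using eig_eq[OF s(1) ne(1)] eig_eq[OF s(2) ne(2)] by auto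
  have n1: "n - 1 < n" using assms by simp
  show "p \<bullet> p' \<noteq> 0"
  proof (cases "\<sigma> = 0")
    case True
    then have u: "p = unit_vec n (n - 1) \<or> p = - unit_vec n (n - 1)" using part1 assms ne by blast
    show ?thesis
    proof (cases "\<sigma>' = 0")
      case True
      then have "p' = unit_vec n (n - 1) \<or> p' = - unit_vec n (n - 1)" using part1 assms ne by blast
      then have "p' $ (n - 1) \<noteq> 0" using n1 by auto
      then show ?thesis using dot_unit[OF pc(2) assms _ u] by blast
    next
      case False
      then have "(\<forall>k<n. p' $ k > 0) \<or> (\<forall>k<n. p' $ k < 0)" using signs[OF assms _ ne(2)] s by simp
      then have "p' $ (n - 1) \<noteq> 0" using n1 by force
      then show ?thesis using dot_unit[OF pc(2) assms _ u] by blast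
    qed
  next
    case False
    then have sp: "(\<forall>k<n. p $ k > 0) \<or> (\<forall>k<n. p $ k < 0)" using signs[OF assms _ ne(1)] s by simp
    show ?thesis
    proof (cases "\<sigma>' = 0")
      case True
      then have u: "p' = unit_vec n (n - 1) \<or> p' = - unit_vec n (n - 1)" using part1 assms ne by blast
      have "p $ (n - 1) \<noteq> 0" using n1 sp by force
      then have "p' \<bullet> p \<noteq> 0" using dot_unit[OF pc(1) assms _ u] by blast
      then show ?thesis using comm_scalar_prod[OF pc(1) pc(2)] by simp
    next
      case False
      then have "(\<forall>k<n. p' $ k > 0) \<or> (\<forall>k<n. p' $ k < 0)" using signs[OF assms _ ne(2)] s by simp
      then show ?thesis using dot_sign[OF pc assms sp] by blast
    qed
  qed
qed
  show ?thesis using P1 P2 P3 by blast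
qed

end
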